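(* Let $M$ be a generic structure for the class $\mathcal{C}$ (as described in the context), and let $\bar a,\bar b$ be tuples of $M$ enumerating strong substructures of the same type over $\emptyset$. If $tp(\bar a/N)=tp(\bar b/N)$ for some elementary substructure $N\preceq M$, then for every pair of subtuples $\bar a'\subseteq\bar a$, $\bar b'\subseteq\bar b$ of length $l$ occupying the same places in $\bar a$ and $\bar b$, $$(\bar a'\le_l\bar b'<_l f(\bar a'))\vee(\bar b'\le_l\bar a'<_l f(\bar b')).$$
   Context: Let $L=\{E_n,K_n,R_n : 2<n<\omega\}$ be a relational language, where $E_n$ and $R_n$ have arity $2n$ and $K_n$ has arity $3n$. All these relations hold only on tuples whose $n$-blocks consist of $n$ distinct elements, and their truth depends only on the underlying $n$-element sets of the blocks. Let $K$ be the class of finite $L$-structures $C$ such that for each $n$: (1) $E_n$ is an equivalence relation on the set ${C\choose n}$ of $n$-element subsets of $C$; (2) $R_n$ is irreflexive, respects $E_n$, and induces a partial injective function on ${C\choose n}/E_n$; (3) $K_n$ respects $E_n$ in each argument and induces a circular order on ${C\choose n}/E_n$; (4) $R_n(\bar x,\bar y)\wedge R_n(\bar y,\bar z)\to K_n(\bar x,\bar y,\bar z)$, and if $R_n(\bar v_i,\bar w_i)$ for $i=1,2,3$ then $K_n(\bar v_1,\bar v_2,\bar v_3)\leftrightarrow K_n(\bar w_1,\bar w_2,\bar w_3)$; (5) the partial function induced by $R_n$ extends to an injective function $f$ on some larger domain such that $f^n$ is the identity on its domain but $f^m(V)\ne V$ for every $V\in{C\choose n}/E_n$ and $0<m<n$.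 A structure $A\in K$ is strong if for every $n$, either all elements of ${A\choose n}$ are pairwise $E_n$-equivalent, or every $\bar a\in{A\choose n}$ lies in an $R_n$-cycle: a sequence $\bar a_1=\bar a,\dots,\bar a_n$ of pairwise non-$E_n$-equivalent elements of ${A\choose n}$ with $R_n(\bar a_i,\bar a_{i+1})$ for $i<n$ and $R_n(\bar a_n,\bar a_1)$. Let $\mathcal{C}$ be the class of strong structures in $K$. A countable $L$-structure $M$ is generic for $\mathcal{C}$ if: $\mathcal{C}$ is exactly the class of finite substructures of $M$ that belong to $\mathcal{C}$ (strong substructures); $M$ is the union of a chain of strong finite substructures; and whenever $A\subseteq M$ is a strong finite substructure and $A\subseteq B\in\mathcal{C}$, $B$ embeds into $M$ over $A$. Such $M$ exists, is $\aleph_0$-categorical, and every isomorphism between strong finite substructures of $M$ extends to an automorphism. Notation: $\bar a<_n\bar b<_n\bar c$ means $K_n(\bar a,\bar b,\bar c)$; $\le_n$ is its version allowing equality of $E_n$-classes; $f(\bar c)$ denotes some (any) $\bar c'$ with $R_n(\bar c,\bar c')$, where $n$ is the length of $\bar c$. *)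

theory Defs
  imports Main "HOL-Library.Countable_Set"
begin

text \<open>Relation symbols E_n, K_n, R_n. Only n > 2 is part of the language; an
L-structure interprets symbols with n \<le> 2 as empty (see Lstruct).\<close>

datatype sym = Esym nat | Ksym nat | Rsym nat

fun bsize :: "sym \<Rightarrow> nat" where
  "bsize (Esym n) = n" | "bsize (Ksym n) = n" | "bsize (Rsym n) = n"

fun bcount :: "sym \<Rightarrow> nat" where
  "bcount (Esym n) = 2" | "bcount (Ksym n) = 3" | "bcount (Rsym n) = 2"

definition block :: "nat \<Rightarrow> nat \<Rightarrow> 'a list \<Rightarrow> 'a list" where
  "block n j xs = take n (drop (j * n) xs)"

definition block_ok :: "sym \<Rightarrow> 'a list \<Rightarrow> bool" where
  "block_ok s xs \<longleftrightarrow> length xs = bcount s * bsize s \<and>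
     (\<forall>j < bcount s. distinct (block (bsize s) j xs))"

definition same_blocks :: "sym \<Rightarrow> 'a list \<Rightarrow> 'a list \<Rightarrow> bool" where
  "same_blocks s xs ys \<longleftrightarrow>
     (\<forall>j < bcount s. set (block (bsize s) j xs) = set (block (bsize s) j ys))"

definition Lstruct :: "'a set \<Rightarrow> (sym \<Rightarrow> 'a list \<Rightarrow> bool) \<Rightarrow> bool" where
  "Lstruct U I \<longleftrightarrow> U \<noteq> {} \<and>
     (\<forall>s xs. I s xs \<longrightarrow> set xs \<subseteq> U \<and> 2 < bsize s \<and> block_ok s xs) \<and>
     (\<forall>s xs ys. block_ok s xs \<longrightarrow> block_ok s ys \<longrightarrow> same_blocks s xs ys \<longrightarrow>
        I s xs = I s ys)"

definition nsets :: "'a set \<Rightarrow> nat \<Rightarrow> 'a set set" where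
  "nsets A n = {X. X \<subseteq> A \<and> card X = n}"

definition rel2 :: "(sym \<Rightarrow> 'a list \<Rightarrow> bool) \<Rightarrow> sym \<Rightarrow> 'a set \<Rightarrow> 'a set \<Rightarrow> bool" where
  "rel2 I s X Y \<longleftrightarrow> (\<exists>x y. distinct x \<and> distinct y \<and> set x = X \<and> set y = Y \<and> I s (x @ y))"

definition rel3 :: "(sym \<Rightarrow> 'a list \<Rightarrow> bool) \<Rightarrow> sym \<Rightarrow> 'a set \<Rightarrow> 'a set \<Rightarrow> 'a set \<Rightarrow> bool" where
  "rel3 I s X Y Z \<longleftrightarrow> (\<exists>x y z. distinct x \<and> distinct y \<and> distinct z \<and>
      set x = X \<and> set y = Y \<and> set z = Z \<and> I s (x @ y @ z))"

definition Ecls :: "(sym \<Rightarrow> 'a list \<Rightarrow> bool) \<Rightarrow> 'a set \<Rightarrow> nat \<Rightarrow> 'a set \<Rightarrow> 'a set set" where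
  "Ecls I A n X = {Y \<in> nsets A n. rel2 I (Esym n) X Y}"

definition condK :: "(sym \<Rightarrow> 'a list \<Rightarrow> bool) \<Rightarrow> 'a set \<Rightarrow> nat \<Rightarrow> bool" where
  "condK I A n \<longleftrightarrow>
    (let S = nsets A n; E = rel2 I (Esym n); R = rel2 I (Rsym n); K = rel3 I (Ksym n);
         Q = Ecls I A n ` S;
         Rc = (\<lambda>V W. \<exists>X\<in>V. \<exists>Y\<in>W. R X Y) in
     \<comment> \<open>(1) E_n is an equivalence relation on S\<close>
     (\<forall>X\<in>S. E X X) \<and>
     (\<forall>X\<in>S. \<forall>Y\<in>S. E X Y \<longrightarrow> E Y X) \<and>
     (\<forall>X\<in>S. \<forall>Y\<in>S. \<forall>Z\<in>S. E X Y \<longrightarrow> E Y Z \<longrightarrow> E X Z) \<and>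
     \<comment> \<open>(2) R_n irreflexive, respects E_n, partial injective function on classes\<close>
     (\<forall>X\<in>S. \<not> R X X) \<and>
     (\<forall>X\<in>S. \<forall>X'\<in>S. \<forall>Y\<in>S. \<forall>Y'\<in>S. E X X' \<longrightarrow> E Y Y' \<longrightarrow> R X Y \<longrightarrow> R X' Y') \<and>
     (\<forall>X\<in>S. \<forall>Y\<in>S. \<forall>Z\<in>S. R X Y \<longrightarrow> R X Z \<longrightarrow> E Y Z) \<and>
     (\<forall>X\<in>S. \<forall>Y\<in>S. \<forall>Z\<in>S. R X Z \<longrightarrow> R Y Z \<longrightarrow> E X Y) \<and>
     \<comment> \<open>(3) K_n respects E_n in each argument and is a circular order on classes\<close>
     (\<forall>X\<in>S. \<forall>X'\<in>S. \<forall>Y\<in>S. \<forall>Y'\<in>S. \<forall>Z\<in>S. \<forall>Z'\<in>S.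
        E X X' \<longrightarrow> E Y Y' \<longrightarrow> E Z Z' \<longrightarrow> K X Y Z \<longrightarrow> K X' Y' Z') \<and>
     (\<forall>X\<in>S. \<forall>Y\<in>S. \<forall>Z\<in>S. K X Y Z \<longrightarrow> K Y Z X) \<and>
     (\<forall>X\<in>S. \<forall>Y\<in>S. \<forall>Z\<in>S. K X Y Z \<longrightarrow> \<not> K Z Y X) \<and>
     (\<forall>X\<in>S. \<forall>Y\<in>S. \<forall>Z\<in>S. \<forall>W\<in>S. K X Y Z \<longrightarrow> K X Z W \<longrightarrow> K X Y W) \<and>
     (\<forall>X\<in>S. \<forall>Y\<in>S. \<forall>Z\<in>S. \<not> E X Y \<longrightarrow> \<not> E Y Z \<longrightarrow> \<not> E X Z \<longrightarrow> K X Y Z \<or> K Z Y X) \<and>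
     \<comment> \<open>(4)\<close>
     (\<forall>X\<in>S. \<forall>Y\<in>S. \<forall>Z\<in>S. R X Y \<longrightarrow> R Y Z \<longrightarrow> K X Y Z) \<and>
     (\<forall>V1\<in>S. \<forall>W1\<in>S. \<forall>V2\<in>S. \<forall>W2\<in>S. \<forall>V3\<in>S. \<forall>W3\<in>S.
        R V1 W1 \<longrightarrow> R V2 W2 \<longrightarrow> R V3 W3 \<longrightarrow> (K V1 V2 V3 \<longleftrightarrow> K W1 W2 W3)) \<and>
     \<comment> \<open>(5) the induced partial function on classes extends to an injective f on a
         larger domain D with f^n = id on D and no class of period m with 0 < m < n\<close>
     (\<exists>(D :: ('a set set + nat) set) f.
        Inl ` Q \<subseteq> D \<and> f ` D \<subseteq> D \<and> inj_on f D \<and>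
        (\<forall>V\<in>D. (f ^^ n) V = V) \<and>
        (\<forall>V\<in>Q. \<forall>m. 0 < m \<and> m < n \<longrightarrow> (f ^^ m) (Inl V) \<noteq> Inl V) \<and>
        (\<forall>V\<in>Q. \<forall>W\<in>Q. Rc V W \<longrightarrow> f (Inl V) = Inl W)))"

definition inK :: "(sym \<Rightarrow> 'a list \<Rightarrow> bool) \<Rightarrow> 'a set \<Rightarrow> bool" where
  "inK I A \<longleftrightarrow> finite A \<and> (\<forall>n. 2 < n \<longrightarrow> condK I A n)"

definition in_Rcycle :: "(sym \<Rightarrow> 'a list \<Rightarrow> bool) \<Rightarrow> 'a set \<Rightarrow> nat \<Rightarrow> 'a set \<Rightarrow> bool" where
  "in_Rcycle I A n X \<longleftrightarrow> (\<exists>xs :: 'a set list. length xs = n \<and> xs ! 0 = X \<and>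
      set xs \<subseteq> nsets A n \<and>
      (\<forall>i<n. \<forall>j<n. i \<noteq> j \<longrightarrow> \<not> rel2 I (Esym n) (xs ! i) (xs ! j)) \<and>
      (\<forall>i. i + 1 < n \<longrightarrow> rel2 I (Rsym n) (xs ! i) (xs ! (i + 1))) \<and>
      rel2 I (Rsym n) (xs ! (n - 1)) (xs ! 0))"

text \<open>Strong finite structures (the class C); A is the universe, relations are I restricted to A.\<close>

definition strong :: "(sym \<Rightarrow> 'a list \<Rightarrow> bool) \<Rightarrow> 'a set \<Rightarrow> bool" where
  "strong I A \<longleftrightarrow> inK I A \<and>
     (\<forall>n. 2 < n \<longrightarrow>
        (\<forall>X\<in>nsets A n. \<forall>Y\<in>nsets A n. rel2 I (Esym n) X Y) \<or>
        (\<forall>X\<in>nsets A n. in_Rcycle I A n X))"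

definition embedding :: "'b set \<Rightarrow> (sym \<Rightarrow> 'b list \<Rightarrow> bool) \<Rightarrow> 'a set \<Rightarrow>
    (sym \<Rightarrow> 'a list \<Rightarrow> bool) \<Rightarrow> ('b \<Rightarrow> 'a) \<Rightarrow> bool" where
  "embedding B IB U I h \<longleftrightarrow> inj_on h B \<and> h ` B \<subseteq> U \<and>
     (\<forall>s xs. set xs \<subseteq> B \<longrightarrow> (IB s xs \<longleftrightarrow> I s (map h xs)))"

definition generic :: "'a set \<Rightarrow> (sym \<Rightarrow> 'a list \<Rightarrow> bool) \<Rightarrow> bool" where
  "generic U I \<longleftrightarrow> countable U \<and> Lstruct U I \<and>
    \<comment> \<open>every member of C (up to isomorphism) is a substructure of M\<close>
    (\<forall>(B :: nat set) IB. Lstruct B IB \<longrightarrow> strong IB B \<longrightarrow> (\<exists>h. embedding B IB U I h)) \<and>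
    \<comment> \<open>M is the union of a chain of strong finite substructures\<close>
    (\<exists>C :: nat \<Rightarrow> 'a set. (\<forall>k. C k \<subseteq> C (Suc k) \<and> C k \<subseteq> U \<and> strong I (C k)) \<and>
        (\<Union>k. C k) = U) \<and>
    \<comment> \<open>extension property over strong finite substructures\<close>
    (\<forall>A (B :: ('a + nat) set) IB. A \<subseteq> U \<longrightarrow> strong I A \<longrightarrow>
        Lstruct B IB \<longrightarrow> strong IB B \<longrightarrow> Inl ` A \<subseteq> B \<longrightarrow>
        (\<forall>s xs. set xs \<subseteq> A \<longrightarrow> (IB s (map Inl xs) \<longleftrightarrow> I s xs)) \<longrightarrow>
        (\<exists>h. embedding B IB U I h \<and> (\<forall>a\<in>A. h (Inl a) = a)))"

datatype fm = Atom sym "nat list" | Eq nat nat | Neg fm | Conj fm fm | Ex nat fm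

fun sat :: "'a set \<Rightarrow> (sym \<Rightarrow> 'a list \<Rightarrow> bool) \<Rightarrow> (nat \<Rightarrow> 'a) \<Rightarrow> fm \<Rightarrow> bool" where
  "sat U I v (Atom s xs) = I s (map v xs)"
| "sat U I v (Eq x y) = (v x = v y)"
| "sat U I v (Neg \<phi>) = (\<not> sat U I v \<phi>)"
| "sat U I v (Conj \<phi> \<psi>) = (sat U I v \<phi> \<and> sat U I v \<psi>)"
| "sat U I v (Ex x \<phi>) = (\<exists>a\<in>U. sat U I (v(x := a)) \<phi>)"

fun fv :: "fm \<Rightarrow> nat set" where
  "fv (Atom s xs) = set xs"
| "fv (Eq x y) = {x, y}"
| "fv (Neg \<phi>) = fv \<phi>"
| "fv (Conj \<phi> \<psi>) = fv \<phi> \<union> fv \<psi>"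
| "fv (Ex x \<phi>) = fv \<phi> - {x}"

definition asg :: "'a list \<Rightarrow> (nat \<Rightarrow> 'a) \<Rightarrow> nat \<Rightarrow> 'a" where
  "asg a v i = (if i < length a then a ! i else v i)"

definition same_type :: "'a set \<Rightarrow> (sym \<Rightarrow> 'a list \<Rightarrow> bool) \<Rightarrow> 'a set \<Rightarrow> 'a list \<Rightarrow> 'a list \<Rightarrow> bool" where
  "same_type U I P a b \<longleftrightarrow> length a = length b \<and>
     (\<forall>\<phi> v. range v \<subseteq> U \<longrightarrow> (\<forall>i\<in>fv \<phi>. length a \<le> i \<longrightarrow> v i \<in> P) \<longrightarrow>
        (sat U I (asg a v) \<phi> \<longleftrightarrow> sat U I (asg b v) \<phi>))"

definition elem_sub :: "'a set \<Rightarrow> 'a set \<Rightarrow> (sym \<Rightarrow> 'a list \<Rightarrow> bool) \<Rightarrow> bool" where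
  "elem_sub N U I \<longleftrightarrow> N \<subseteq> U \<and> N \<noteq> {} \<and>
     (\<forall>\<phi> v. range v \<subseteq> N \<longrightarrow> (sat N I v \<phi> \<longleftrightarrow> sat U I v \<phi>))"

definition le_lt :: "(sym \<Rightarrow> 'a list \<Rightarrow> bool) \<Rightarrow> nat \<Rightarrow> 'a list \<Rightarrow> 'a list \<Rightarrow> 'a list \<Rightarrow> bool" where
  "le_lt I n x y z \<longleftrightarrow> I (Ksym n) (x @ y @ z) \<or> (I (Esym n) (x @ y) \<and> \<not> I (Esym n) (y @ z))"

end

theory Submission
  imports Defs
begin


locale co =
  fixes S :: "'s set" and E R :: "'s \<Rightarrow> 's \<Rightarrow> bool" and K :: "'s \<Rightarrow> 's \<Rightarrow> 's \<Rightarrow> bool"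
  assumes Erefl: "\<And>X. X\<in>S \<Longrightarrow> E X X"
  and Esym: "\<And>X Y. X\<in>S \<Longrightarrow> Y\<in>S \<Longrightarrow> E X Y \<Longrightarrow> E Y X"
  and Etrans: "\<And>X Y Z. X\<in>S \<Longrightarrow> Y\<in>S \<Longrightarrow> Z\<in>S \<Longrightarrow> E X Y \<Longrightarrow> E Y Z \<Longrightarrow> E X Z"
  and Rirr: "\<And>X. X\<in>S \<Longrightarrow> \<not> R X X"
  and Rresp: "\<And>X X' Y Y'. X\<in>S \<Longrightarrow> X'\<in>S \<Longrightarrow> Y\<in>S \<Longrightarrow> Y'\<in>S \<Longrightarrow> E X X' \<Longrightarrow> E Y Y' \<Longrightarrow> R X Y \<Longrightarrow> R X' Y'"
  and Rfun: "\<And>X Y Z. X\<in>S \<Longrightarrow> Y\<in>S \<Longrightarrow> Z\<in>S \<Longrightarrow> R X Y \<Longrightarrow> R X Z \<Longrightarrow> E Y Z"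
  and Rinj: "\<And>X Y Z. X\<in>S \<Longrightarrow> Y\<in>S \<Longrightarrow> Z\<in>S \<Longrightarrow> R X Z \<Longrightarrow> R Y Z \<Longrightarrow> E X Y"
  and Kresp: "\<And>X X' Y Y' Z Z'. X\<in>S \<Longrightarrow> X'\<in>S \<Longrightarrow> Y\<in>S \<Longrightarrow> Y'\<in>S \<Longrightarrow> Z\<in>S \<Longrightarrow> Z'\<in>S \<Longrightarrow>
        E X X' \<Longrightarrow> E Y Y' \<Longrightarrow> E Z Z' \<Longrightarrow> K X Y Z \<Longrightarrow> K X' Y' Z'"
  and Kcyc: "\<And>X Y Z. X\<in>S \<Longrightarrow> Y\<in>S \<Longrightarrow> Z\<in>S \<Longrightarrow> K X Y Z \<Longrightarrow> K Y Z X"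
  and Kasym: "\<And>X Y Z. X\<in>S \<Longrightarrow> Y\<in>S \<Longrightarrow> Z\<in>S \<Longrightarrow> K X Y Z \<Longrightarrow> \<not> K Z Y X"
  and Ktrans: "\<And>X Y Z W. X\<in>S \<Longrightarrow> Y\<in>S \<Longrightarrow> Z\<in>S \<Longrightarrow> W\<in>S \<Longrightarrow> K X Y Z \<Longrightarrow> K X Z W \<Longrightarrow> K X Y W"
  and Ktot: "\<And>X Y Z. X\<in>S \<Longrightarrow> Y\<in>S \<Longrightarrow> Z\<in>S \<Longrightarrow> \<not> E X Y \<Longrightarrow> \<not> E Y Z \<Longrightarrow> \<not> E X Z \<Longrightarrow> K X Y Z \<or> K Z Y X"
  and RK: "\<And>X Y Z. X\<in>S \<Longrightarrow> Y\<in>S \<Longrightarrow> Z\<in>S \<Longrightarrow> R X Y \<Longrightarrow> R Y Z \<Longrightarrow> K X Y Z"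
  and RKpres: "\<And>V1 W1 V2 W2 V3 W3. V1\<in>S \<Longrightarrow> W1\<in>S \<Longrightarrow> V2\<in>S \<Longrightarrow> W2\<in>S \<Longrightarrow> V3\<in>S \<Longrightarrow> W3\<in>S \<Longrightarrow>
        R V1 W1 \<Longrightarrow> R V2 W2 \<Longrightarrow> R V3 W3 \<Longrightarrow> (K V1 V2 V3 \<longleftrightarrow> K W1 W2 W3)"
  and succ: "\<And>X. X\<in>S \<Longrightarrow> \<exists>Y\<in>S. R X Y"
begin

definition lelt where "lelt a z b \<longleftrightarrow> K a z b \<or> (E a z \<and> \<not> E z b)"

lemma K_distinct: "X\<in>S \<Longrightarrow> Y\<in>S \<Longrightarrow> Z\<in>S \<Longrightarrow> K X Y Z \<Longrightarrow> \<not> E X Y \<and> \<not> E Y Z \<and> \<not> E X Z"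
proof -
  assume s: "X\<in>S" "Y\<in>S" "Z\<in>S" and k: "K X Y Z"
  have aba: "\<And>a b. a\<in>S \<Longrightarrow> b\<in>S \<Longrightarrow> \<not> K a b a" using Kasym by blast
  show ?thesis
  proof (intro conjI notI)
    assume "E X Y" then have "K Y Y Z" using Kresp[of X Y Y Y Z Z] s k Erefl by blast
    then have "K Y Z Y" using Kcyc s by blast
    then show False using aba s by blast
  next
    assume "E Y Z" then have "K X Z Z" using Kresp[of X X Y Z Z Z] s k Erefl by blast
    then have "K Z X Z" using Kcyc s by blast
    then show False using aba s by blast
  next
    assume "E X Z" then have "K X Y X" using Kresp[of X X Y Y Z X] s k Erefl Esym by blast
    then show False using aba s by blast
  qed
qed

lemma K_next: "a\<in>S \<Longrightarrow> b\<in>S \<Longrightarrow> c\<in>S \<Longrightarrow> d\<in>S \<Longrightarrow> K a b c \<Longrightarrow> K a c d \<Longrightarrow> K b c d"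
proof -
  assume s: "a\<in>S" "b\<in>S" "c\<in>S" "d\<in>S" and k: "K a b c" "K a c d"
  have "\<not> E b d"
  proof
    assume "E b d" then have "K a c b" using Kresp[of a a c c d b] k s Erefl Esym by blast
    then show False using Kasym Kcyc s k by blast
  qed
  moreover have "\<not> E b c" "\<not> E c d" using K_distinct k s by auto
  ultimately have "K b c d \<or> K d c b" using Ktot s by blast
  moreover have "\<not> K d c b"
  proof
    assume "K d c b"
    then have "K c b d" using Kcyc s by blast
    moreover have "K c d a" using Kcyc k s by blast
    ultimately have "K c b a" using Ktrans s by blast
    then have "K a c b" using Kcyc s by blast
    then show False using Kasym Kcyc s k by blast
  qed
  ultimately show ?thesis by blast
qed

lemma lelt_resp: "a\<in>S \<Longrightarrow> z\<in>S \<Longrightarrow> b\<in>S \<Longrightarrow> a'\<in>S \<Longrightarrow> z'\<in>S \<Longrightarrow> b'\<in>S \<Longrightarrow>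
   E a a' \<Longrightarrow> E z z' \<Longrightarrow> E b b' \<Longrightarrow> lelt a z b \<Longrightarrow> lelt a' z' b'"
proof -
  assume s: "a\<in>S" "z\<in>S" "b\<in>S" "a'\<in>S" "z'\<in>S" "b'\<in>S" and e: "E a a'" "E z z'" "E b b'"
    and l: "lelt a z b"
  have "K a z b \<Longrightarrow> K a' z' b'" using Kresp[OF s(1,4,2,5,3,6) e] .
  moreover have "E a z \<Longrightarrow> E a' z'" using Etrans Esym s e by meson
  moreover have "E z' b' \<Longrightarrow> E z b" using Etrans Esym s e by meson
  ultimately show ?thesis using l unfolding lelt_def by blast
qed

lemma total: "a\<in>S \<Longrightarrow> z\<in>S \<Longrightarrow> b\<in>S \<Longrightarrow> \<not> E a b \<Longrightarrow> lelt a z b \<or> lelt b z a"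
proof -
  assume s: "a\<in>S" "z\<in>S" "b\<in>S" and n: "\<not> E a b"
  show ?thesis
  proof (cases "E a z")
    case True
    then have "\<not> E z b" using Etrans s n by blast
    then show ?thesis using True unfolding lelt_def by blast
  next
    case f1: False
    show ?thesis
    proof (cases "E b z")
      case True
      then have "\<not> E z a" using Etrans Esym s n by blast
      then show ?thesis using True unfolding lelt_def by blast
    next
      case False
      then have "K a z b \<or> K b z a" using Ktot[of a z b] s n f1 Esym by blast
      then show ?thesis unfolding lelt_def by blast
    qed
  qed
qed

lemma split: assumes s: "a\<in>S" "z\<in>S" "b\<in>S" "c\<in>S" and l: "lelt a z c"
  shows "lelt a z b \<or> lelt b z c"
proof (cases "E a b")
  case True then show ?thesis using lelt_resp[of a z c b z c] s l Erefl by blast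
next
  case nab: False
  show ?thesis
  proof (cases "E b c")
    case True then show ?thesis using lelt_resp[of a z c a z b] s l Erefl Esym by blast
  next
    case nbc: False
    have nac: "\<not> E a c"
  proof
    assume eac: "E a c"
    show False using l unfolding lelt_def
    proof
      assume "K a z c" then show False using K_distinct s eac by blast
    next
      assume "E a z \<and> \<not> E z c" then show False using Etrans Esym s eac by blast
    qed
  qed
    show ?thesis
    proof (cases "E a z")
      case True then have "\<not> E z b" using nab s Etrans by blast
        then show ?thesis unfolding lelt_def using True by blast
    next
      case naz: False
      show ?thesis
      proof (cases "E z b")
        case True then have "\<not> E z c" using nbc s Etrans Esym by blast
        then show ?thesis unfolding lelt_def using True Esym s by blast
      next
        case nzb: False
        have kazc: "K a z c" using l naz unfolding lelt_def by blast
        have "K a z b \<or> K b z a" using Ktot s naz nzb nab by blast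
        then show ?thesis
        proof
          assume "K a z b" then show ?thesis unfolding lelt_def by blast
        next
          assume kbza: "K b z a"
          have "K z c a" using kazc Kcyc s by blast
          moreover have "K z a b" using kbza Kcyc s by blast
          ultimately have "K z c b" using Ktrans s by blast
          then have "K b z c" using Kcyc s by blast
          then show ?thesis unfolding lelt_def by blast
        qed
      qed
    qed
  qed
qed

lemma chain: assumes "\<And>i. i \<le> n \<Longrightarrow> p i \<in> S" "z\<in>S" "m < n" "lelt (p m) z (p n)"
  shows "\<exists>i. m \<le> i \<and> i < n \<and> lelt (p i) z (p (Suc i))"
  using assms
proof (induction n)
  case 0 then show ?case by simp
next
  case (Suc n)
  show ?case
  proof (cases "m = n")
    case True then show ?thesis using Suc.prems by auto
  next
    case False
    then have "m < n" using Suc.prems by auto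
    have "lelt (p m) z (p n) \<or> lelt (p n) z (p (Suc n))"
      using split[of "p m" z "p n" "p (Suc n)"] Suc.prems by auto
    then show ?thesis
    proof
      assume "lelt (p m) z (p n)"
      then obtain i where "m \<le> i \<and> i < n \<and> lelt (p i) z (p (Suc i))"
        using Suc.IH[of] Suc.prems \<open>m < n\<close> by auto
      then show ?thesis by (intro exI[of _ i]) auto
    next
      assume "lelt (p n) z (p (Suc n))"
      then show ?thesis using \<open>m < n\<close> by (intro exI[of _ n]) auto
    qed
  qed
qed

lemma cover: assumes "\<And>i. i \<le> n \<Longrightarrow> p i \<in> S" "z\<in>S" "1 < n" "E (p n) (p 0)" "\<not> E (p 0) (p 1)"
  shows "\<exists>i<n. lelt (p i) z (p (Suc i))"
proof -
  have s: "p 0 \<in> S" "p 1 \<in> S" "p n \<in> S" using assms by auto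
  from total[of "p 0" z "p 1"] s assms
  have "lelt (p 0) z (p 1) \<or> lelt (p 1) z (p 0)" by blast
  then show ?thesis
  proof
    assume "lelt (p 0) z (p 1)" then show ?thesis using assms by (intro exI[of _ 0]) auto
  next
    assume "lelt (p 1) z (p 0)"
    then have "lelt (p 1) z (p n)" using lelt_resp[of "p 1" z "p 0" "p 1" z "p n"] s assms Erefl Esym by blast
    from chain[OF assms(1) assms(2) _ this] assms(3) show ?thesis by auto
  qed
qed

lemma E_pres: "X\<in>S \<Longrightarrow> Y\<in>S \<Longrightarrow> FX\<in>S \<Longrightarrow> FY\<in>S \<Longrightarrow> R X FX \<Longrightarrow> R Y FY \<Longrightarrow> E X Y \<longleftrightarrow> E FX FY"
proof
  assume s: "X\<in>S" "Y\<in>S" "FX\<in>S" "FY\<in>S" and r: "R X FX" "R Y FY"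
  {assume "E X Y" then have "R Y FX" using Rresp[of X Y FX FX] s r Erefl by blast
   then show "E FX FY" using Rfun[of Y FX FY] s r by blast}
  {assume "E FX FY" then have "R X FY" using Rresp[of X X FX FY] s r Erefl by blast
   then show "E X Y" using Rinj[of X Y FY] s r by blast}
qed

lemma lelt_pres: "a\<in>S \<Longrightarrow> z\<in>S \<Longrightarrow> b\<in>S \<Longrightarrow> fa\<in>S \<Longrightarrow> fz\<in>S \<Longrightarrow> fb\<in>S \<Longrightarrow>
  R a fa \<Longrightarrow> R z fz \<Longrightarrow> R b fb \<Longrightarrow> lelt a z b \<Longrightarrow> lelt fa fz fb"
proof -
  assume s: "a\<in>S" "z\<in>S" "b\<in>S" "fa\<in>S" "fz\<in>S" "fb\<in>S" and r: "R a fa" "R z fz" "R b fb"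
    and l: "lelt a z b"
  have "K a z b \<longleftrightarrow> K fa fz fb" using RKpres[OF s(1,4,2,5,3,6) r] .
  moreover have "E a z \<longleftrightarrow> E fa fz" "E z b \<longleftrightarrow> E fz fb" using E_pres s r by blast+
  ultimately show ?thesis using l unfolding lelt_def by blast
qed

lemma close_half: assumes s: "W\<in>S" "FW\<in>S" "X\<in>S" "FX\<in>S" "Y\<in>S"
  and r: "R W FW" "R X FX"
  and l: "lelt W X FW" "lelt W Y FW" and k: "K W X Y \<or> E W X"
  and nxy: "\<not> E X Y"
  shows "lelt X Y FX"
proof (cases "E W X")
  case True
  have "E FW FX" using E_pres True s r by blast
  then show ?thesis using lelt_resp[of W Y FW X Y FX] l s True Erefl by blast
next
  case False
  obtain FFW where f2: "FFW \<in> S" "R FW FFW" using succ s by blast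
  have kwxy: "K W X Y" using k False by blast
  have kwyfw: "K W Y FW" using l(2) K_distinct kwxy s unfolding lelt_def by blast
  have kwfwffw: "K W FW FFW" using RK s f2 r by blast
  have "lelt FW FX FFW" using lelt_pres[of W X FW FW FX FFW] s r f2 l by blast
  have kwfwfx: "K W FW FX \<or> E FW FX"
  proof (cases "E FW FX")
    case False
    then have "K FW FX FFW" using \<open>lelt FW FX FFW\<close> unfolding lelt_def by blast
    moreover have "K FW FFW W" using kwfwffw Kcyc s f2 by blast
    ultimately have "K FW FX W" using Ktrans s f2 by blast
    then show ?thesis using Kcyc s by blast
  qed simp
  have kwyfx: "K W Y FX"
    using kwfwfx
  proof
    assume "K W FW FX" then show ?thesis using Ktrans kwyfw s by blast
  next
    assume "E FW FX" then show ?thesis using Kresp[of W W Y Y FW FX] kwyfw s Erefl by blast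
  qed
  have "K X Y FX" using K_next[OF _ _ _ _ kwxy kwyfx] s by blast
  then show ?thesis unfolding lelt_def by blast
qed

lemma close: assumes s: "W\<in>S" "FW\<in>S" "X\<in>S" "FX\<in>S" "Y\<in>S" "FY\<in>S"
  and r: "R W FW" "R X FX" "R Y FY"
  and l: "lelt W X FW" "lelt W Y FW"
  shows "lelt X Y FX \<or> lelt Y X FY"
proof (cases "E X Y")
  case True
  have "\<not> E Y FX"
  proof
    assume "E Y FX" then have "E X FX" using Etrans True s by blast
    then have "R X X" using Rresp[of X X FX X] s r Erefl Esym by blast
    then show False using Rirr s by blast
  qed
  then show ?thesis using True unfolding lelt_def by blast
next
  case False
  show ?thesis
  proof (cases "E W X \<or> K W X Y")
    case True then show ?thesis using close_half[OF s(1-5) r(1,2) l] False by blast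
  next
    case c: False
    have "E W Y \<or> K W Y X"
    proof (rule ccontr)
      assume "\<not> (E W Y \<or> K W Y X)"
      then have "K W X Y \<or> K Y X W" using Ktot[of W X Y] c False s by blast
      then have "K Y X W" using c by blast
      then have "K W Y X" using Kcyc s by blast
      then show False using \<open>\<not> (E W Y \<or> K W Y X)\<close> by blast
    qed
    then have "lelt Y X FY" using close_half[OF s(1,2,5,6,3) r(1,3) l(2,1)] False Esym s by blast
    then show ?thesis by blast
  qed
qed

end


lemma block_ok2: "bcount s = 2 \<Longrightarrow> distinct x \<Longrightarrow> distinct y \<Longrightarrow> length x = bsize s \<Longrightarrow> length y = bsize s
   \<Longrightarrow> block_ok s (x @ y)"
  unfolding block_ok_def block_def
  by (auto simp: less_Suc_eq numeral_2_eq_2)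

lemma block_ok3: "bcount s = 3 \<Longrightarrow> distinct x \<Longrightarrow> distinct y \<Longrightarrow> distinct z \<Longrightarrow> length x = bsize s \<Longrightarrow> length y = bsize s
   \<Longrightarrow> length z = bsize s \<Longrightarrow> block_ok s (x @ y @ z)"
  unfolding block_ok_def block_def
  by (auto simp: less_Suc_eq numeral_3_eq_3)

lemma block_ok2_D: "bcount s = 2 \<Longrightarrow> block_ok s (x @ y) \<Longrightarrow> length x = bsize s \<Longrightarrow>
    length y = bsize s \<and> distinct x \<and> distinct y"
proof -
  assume a: "bcount s = 2" "block_ok s (x @ y)" "length x = bsize s"
  then have "length y = bsize s" unfolding block_ok_def by auto
  moreover have "distinct (block (bsize s) 0 (x@y))" "distinct (block (bsize s) 1 (x@y))"
    using a unfolding block_ok_def by auto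
  ultimately show ?thesis using a(3) unfolding block_def by simp
qed

lemma same_blocks2: "bcount s = 2 \<Longrightarrow> length x = bsize s \<Longrightarrow> length y = bsize s \<Longrightarrow>
  length x' = bsize s \<Longrightarrow> length y' = bsize s \<Longrightarrow> set x = set x' \<Longrightarrow> set y = set y' \<Longrightarrow>
  same_blocks s (x @ y) (x' @ y')"
  unfolding same_blocks_def block_def by (auto simp: less_Suc_eq numeral_2_eq_2)

lemma same_blocks3: "bcount s = 3 \<Longrightarrow> length x = bsize s \<Longrightarrow> length y = bsize s \<Longrightarrow> length z = bsize s \<Longrightarrow>
  length x' = bsize s \<Longrightarrow> length y' = bsize s \<Longrightarrow> length z' = bsize s \<Longrightarrow>
  set x = set x' \<Longrightarrow> set y = set y' \<Longrightarrow> set z = set z' \<Longrightarrow>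
  same_blocks s (x @ y @ z) (x' @ y' @ z')"
  unfolding same_blocks_def block_def by (auto simp: less_Suc_eq numeral_3_eq_3)

lemma Lstruct_inv: "Lstruct U I \<Longrightarrow> block_ok s xs \<Longrightarrow> block_ok s ys \<Longrightarrow> same_blocks s xs ys \<Longrightarrow> I s xs = I s ys"
  unfolding Lstruct_def by blast

lemma Lstruct_D: "Lstruct U I \<Longrightarrow> I s xs \<Longrightarrow> set xs \<subseteq> U \<and> 2 < bsize s \<and> block_ok s xs"
  unfolding Lstruct_def by blast

lemma len_eq: "distinct x \<Longrightarrow> distinct x' \<Longrightarrow> set x = set x' \<Longrightarrow> length x = length x'"
  by (metis distinct_card)

lemma inv2: assumes L: "Lstruct U I" and s: "bcount s = 2" and d: "distinct x" "distinct y"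
  and l: "length x = bsize s" "length y = bsize s"
  shows "rel2 I s (set x) (set y) \<longleftrightarrow> I s (x @ y)"
proof
  assume "rel2 I s (set x) (set y)"
  then obtain x' y' where h: "distinct x'" "distinct y'" "set x' = set x" "set y' = set y" "I s (x' @ y')"
    unfolding rel2_def by blast
  have "length x' = bsize s" "length y' = bsize s" using len_eq h d l by metis+
  then show "I s (x @ y)"
    using Lstruct_inv[OF L block_ok2[OF s h(1,2)] block_ok2[OF s d l] same_blocks2[OF s]] h l
    by auto
next
  assume "I s (x @ y)" then show "rel2 I s (set x) (set y)" unfolding rel2_def using d by blast
qed

lemma inv3: assumes L: "Lstruct U I" and s: "bcount s = 3" and d: "distinct x" "distinct y" "distinct z"
  and l: "length x = bsize s" "length y = bsize s" "length z = bsize s"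
  shows "rel3 I s (set x) (set y) (set z) \<longleftrightarrow> I s (x @ y @ z)"
proof
  assume "rel3 I s (set x) (set y) (set z)"
  then obtain x' y' z' where h: "distinct x'" "distinct y'" "distinct z'" "set x' = set x" "set y' = set y"
    "set z' = set z" "I s (x' @ y' @ z')"
    unfolding rel3_def by blast
  have "length x' = bsize s" "length y' = bsize s" "length z' = bsize s" using len_eq h d l by metis+
  then show "I s (x @ y @ z)"
    using Lstruct_inv[OF L block_ok3[OF s h(1,2,3)] block_ok3[OF s d l] same_blocks3[OF s]] h l
    by auto
next
  assume "I s (x @ y @ z)" then show "rel3 I s (set x) (set y) (set z)" unfolding rel3_def using d by blast
qed

lemma rel2_list: assumes L: "Lstruct U I" and s: "bcount s = 2" and r: "rel2 I s (set x) Y"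
  and d: "distinct x" and l: "length x = bsize s"
  shows "\<exists>y. distinct y \<and> set y = Y \<and> length y = bsize s \<and> I s (x @ y)"
proof -
  obtain x' y where h: "distinct x'" "distinct y" "set x' = set x" "set y = Y" "I s (x' @ y)"
    using r unfolding rel2_def by blast
  have lx: "length x' = bsize s" using len_eq h d l by metis
  then have "length y = bsize s" using block_ok2_D[OF s _ lx] Lstruct_D[OF L h(5)] by blast
  then show ?thesis using inv2[OF L s d h(2) l] inv2[OF L s h(1,2) lx] h by auto
qed

lemma chain_fin: assumes "\<And>k. C k \<subseteq> C (Suc k)" "finite F" "F \<subseteq> (\<Union>k. C k)"
  shows "\<exists>k. F \<subseteq> C k"
  using assms(2,3)
proof (induction F rule: finite_induct)
  case empty then show ?case by simp
next
  case (insert x F)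
  then obtain k1 k2 where "x \<in> C k1" "F \<subseteq> C k2" by blast
  moreover have "C k1 \<subseteq> C (max k1 k2)" "C k2 \<subseteq> C (max k1 k2)"
    using lift_Suc_mono_le[of C, OF assms(1)] by auto
  ultimately show ?case by blast
qed

lemma co_inst:
  assumes L: "Lstruct U I" and st: "strong I A" and l: "2 < l"
  and X: "X \<in> nsets A l" and FX: "FX \<in> nsets A l" and r: "rel2 I (Rsym l) X FX"
  shows "co (nsets A l) (rel2 I (Esym l)) (rel2 I (Rsym l)) (rel3 I (Ksym l)) \<and>
         (\<forall>Z \<in> nsets A l. in_Rcycle I A l Z)"
proof -
  have cK: "condK I A l" using st l unfolding strong_def inK_def by blast
  let ?S = "nsets A l" and ?E = "rel2 I (Esym l)" and ?R = "rel2 I (Rsym l)" and ?K = "rel3 I (Ksym l)"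
  note c = cK[unfolded condK_def Let_def]
  note c1 = c[THEN conjunct1]
  note c2 = c[THEN conjunct2, THEN conjunct1]
  note c3 = c[THEN conjunct2, THEN conjunct2, THEN conjunct1]
  note c4 = c[THEN conjunct2, THEN conjunct2, THEN conjunct2, THEN conjunct1]
  note c5 = c[THEN conjunct2, THEN conjunct2, THEN conjunct2, THEN conjunct2, THEN conjunct1]
  note c6 = c[THEN conjunct2, THEN conjunct2, THEN conjunct2, THEN conjunct2, THEN conjunct2, THEN conjunct1]
  note c7 = c[THEN conjunct2, THEN conjunct2, THEN conjunct2, THEN conjunct2, THEN conjunct2, THEN conjunct2, THEN conjunct1]
  note c8 = c[THEN conjunct2, THEN conjunct2, THEN conjunct2, THEN conjunct2, THEN conjunct2, THEN conjunct2, THEN conjunct2, THEN conjunct1]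
  note c9 = c[THEN conjunct2, THEN conjunct2, THEN conjunct2, THEN conjunct2, THEN conjunct2, THEN conjunct2, THEN conjunct2, THEN conjunct2, THEN conjunct1]
  note c10 = c[THEN conjunct2, THEN conjunct2, THEN conjunct2, THEN conjunct2, THEN conjunct2, THEN conjunct2, THEN conjunct2, THEN conjunct2, THEN conjunct2, THEN conjunct1]
  note c11 = c[THEN conjunct2, THEN conjunct2, THEN conjunct2, THEN conjunct2, THEN conjunct2, THEN conjunct2, THEN conjunct2, THEN conjunct2, THEN conjunct2, THEN conjunct2, THEN conjunct1]
  note c12 = c[THEN conjunct2, THEN conjunct2, THEN conjunct2, THEN conjunct2, THEN conjunct2, THEN conjunct2, THEN conjunct2, THEN conjunct2, THEN conjunct2, THEN conjunct2, THEN conjunct2, THEN conjunct1]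
  note c13 = c[THEN conjunct2, THEN conjunct2, THEN conjunct2, THEN conjunct2, THEN conjunct2, THEN conjunct2, THEN conjunct2, THEN conjunct2, THEN conjunct2, THEN conjunct2, THEN conjunct2, THEN conjunct2, THEN conjunct1]
  note c14 = c[THEN conjunct2, THEN conjunct2, THEN conjunct2, THEN conjunct2, THEN conjunct2, THEN conjunct2, THEN conjunct2, THEN conjunct2, THEN conjunct2, THEN conjunct2, THEN conjunct2, THEN conjunct2, THEN conjunct2, THEN conjunct1]
  have cyc: "\<forall>Z \<in> ?S. in_Rcycle I A l Z"
  proof -
    have "\<not> (\<forall>X\<in>?S. \<forall>Y\<in>?S. ?E X Y)"
    proof
      assume "\<forall>X\<in>?S. \<forall>Y\<in>?S. ?E X Y"
      then have "?E FX X" "?E X X" using X FX by auto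
      then have "?R X X" using c5 X FX r by blast
      then show False using c4 X by blast
    qed
    then show ?thesis using st l unfolding strong_def by blast
  qed
  have sc: "\<And>Z. Z \<in> ?S \<Longrightarrow> \<exists>Y\<in>?S. ?R Z Y"
  proof -
    fix Z assume "Z \<in> ?S"
    then obtain xs where h: "length xs = l" "xs ! 0 = Z" "set xs \<subseteq> ?S"
       "\<forall>i. i + 1 < l \<longrightarrow> ?R (xs ! i) (xs ! (i + 1))"
      using cyc unfolding in_Rcycle_def by blast
    then have "?R Z (xs ! 1)" "xs ! 1 \<in> ?S" using l by auto
    then show "\<exists>Y\<in>?S. ?R Z Y" by blast
  qed
  have "co ?S ?E ?R ?K"
    apply unfold_locales
    apply (use c1 in blast)
    apply (use c2 in blast)
    apply (use c3 in blast)
    apply (use c4 in blast)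
    apply (use c5 in blast)
    apply (use c6 in blast)
    apply (use c7 in blast)
    apply (use c8 in blast)
    apply (use c9 in blast)
    apply (use c10 in blast)
    apply (use c11 in blast)
    apply (use c12 in blast)
    apply (use c13 in blast)
    apply (use c14 in blast)
    apply (use sc in blast)
    done
  then show ?thesis using cyc by blast
qed



definition Exs :: "nat \<Rightarrow> nat \<Rightarrow> fm \<Rightarrow> fm" where "Exs m k \<phi> = foldr Ex [m..<m+k] \<phi>"
definition ovr :: "nat \<Rightarrow> 'a list \<Rightarrow> (nat \<Rightarrow> 'a) \<Rightarrow> nat \<Rightarrow> 'a" where
  "ovr m ws v i = (if m \<le> i \<and> i < m + length ws then ws ! (i - m) else v i)"

lemma Exs_0: "Exs m 0 \<phi> = \<phi>" unfolding Exs_def by simp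
lemma Exs_Suc: "Exs m (Suc k) \<phi> = Ex m (Exs (Suc m) k \<phi>)" unfolding Exs_def by (simp add: upt_rec)

lemma ovr_Nil: "ovr m [] v = v" unfolding ovr_def by (rule ext) auto
lemma ovr_Cons: "ovr (Suc m) ws (v(m := a)) = ovr m (a # ws) v"
  unfolding ovr_def by (auto simp: fun_eq_iff nth_Cons' Suc_diff_Suc)

lemma sat_Exs: "sat U I v (Exs m k \<phi>) \<longleftrightarrow> (\<exists>ws. length ws = k \<and> set ws \<subseteq> U \<and> sat U I (ovr m ws v) \<phi>)"
proof (induction k arbitrary: m v)
  case 0 then show ?case by (simp add: Exs_0 ovr_Nil)
next
  case (Suc k)
  have "sat U I v (Exs m (Suc k) \<phi>) \<longleftrightarrow>
     (\<exists>a\<in>U. \<exists>ws. length ws = k \<and> set ws \<subseteq> U \<and> sat U I (ovr m (a # ws) v) \<phi>)"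
    by (simp only: Exs_Suc sat.simps Suc.IH ovr_Cons)
  also have "\<dots> \<longleftrightarrow> (\<exists>ws. length ws = Suc k \<and> set ws \<subseteq> U \<and> sat U I (ovr m ws v) \<phi>)"
  proof
    assume "\<exists>a\<in>U. \<exists>ws. length ws = k \<and> set ws \<subseteq> U \<and> sat U I (ovr m (a # ws) v) \<phi>"
    then obtain a ws where "a \<in> U" "length ws = k" "set ws \<subseteq> U" "sat U I (ovr m (a # ws) v) \<phi>" by blast
    then show "\<exists>ws. length ws = Suc k \<and> set ws \<subseteq> U \<and> sat U I (ovr m ws v) \<phi>"
      by (intro exI[of _ "a # ws"]) auto
  next
    assume "\<exists>ws. length ws = Suc k \<and> set ws \<subseteq> U \<and> sat U I (ovr m ws v) \<phi>"
    then obtain ws where h: "length ws = Suc k" "set ws \<subseteq> U" "sat U I (ovr m ws v) \<phi>" by blast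
    then obtain a ws' where "ws = a # ws'" by (cases ws) auto
    then show "\<exists>a\<in>U. \<exists>ws. length ws = k \<and> set ws \<subseteq> U \<and> sat U I (ovr m (a # ws) v) \<phi>"
      using h by auto
  qed
  finally show ?case .
qed

lemma map_ovr: "length Z = l \<Longrightarrow> length W = l \<Longrightarrow> (\<forall>i<l. v i = Z ! i) \<Longrightarrow>
  map (ovr l W v) [0..<2*l] = Z @ W"
  by (rule nth_equalityI) (auto simp: ovr_def nth_append)

lemma map_ovr0: "length ws = k \<Longrightarrow> map (ovr 0 ws v) [0..<k] = ws"
  by (rule nth_equalityI) (auto simp: ovr_def)

lemma lelt_list: assumes L: "Lstruct U I" and d: "distinct x" "distinct y" "distinct z"
  and l: "length x = l" "length y = l" "length z = l"
  shows "(rel3 I (Ksym l) (set x) (set y) (set z) \<or> (rel2 I (Esym l) (set x) (set y) \<and> \<not> rel2 I (Esym l) (set y) (set z)))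
     \<longleftrightarrow> le_lt I l x y z"
  unfolding le_lt_def using inv2[OF L, of "Esym l"] inv3[OF L, of "Ksym l"] d l by simp

lemma in_nsets: "distinct x \<Longrightarrow> length x = l \<Longrightarrow> set x \<subseteq> A \<Longrightarrow> set x \<in> nsets A l"
  unfolding nsets_def by (simp add: distinct_card)



theorem lemma2p3:
  fixes U N :: "'a set" and I :: "sym \<Rightarrow> 'a list \<Rightarrow> bool"
    and a b :: "'a list" and idx :: "nat list" and l :: nat
  assumes "generic U I"
    and "distinct a" and "set a \<subseteq> U" and "strong I (set a)"
    and "distinct b" and "set b \<subseteq> U" and "strong I (set b)"
    and "same_type U I {} a b"
    and "elem_sub N U I"
    and "same_type U I N a b"
    and "distinct idx" and "length idx = l" and "\<forall>i\<in>set idx. i < length a"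
  shows "\<forall>fa fb. I (Rsym l) (map ((!) a) idx @ fa) \<longrightarrow> I (Rsym l) (map ((!) b) idx @ fb) \<longrightarrow>
           le_lt I l (map ((!) a) idx) (map ((!) b) idx) fa \<or>
           le_lt I l (map ((!) b) idx) (map ((!) a) idx) fb"
proof (intro allI impI)
  fix fa fb
  define a' where "a' = map ((!) a) idx"
  define b' where "b' = map ((!) b) idx"
  assume Ra0: "I (Rsym l) (map ((!) a) idx @ fa)" and Rb0: "I (Rsym l) (map ((!) b) idx @ fb)"
  then have Ra: "I (Rsym l) (a' @ fa)" and Rb: "I (Rsym l) (b' @ fb)" by (simp_all add: a'_def b'_def)
  note gen = assms(1)[unfolded generic_def]
  have Ls: "Lstruct U I" using gen[THEN conjunct2, THEN conjunct1] .
  have "\<exists>C :: nat \<Rightarrow> 'a set. (\<forall>k. C k \<subseteq> C (Suc k) \<and> C k \<subseteq> U \<and> strong I (C k)) \<and>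
        (\<Union>k. C k) = U" using gen[THEN conjunct2, THEN conjunct2, THEN conjunct2, THEN conjunct1] .
  then obtain C where C: "\<And>k. C k \<subseteq> C (Suc k)" "\<And>k. C k \<subseteq> U" "\<And>k. strong I (C k)" "(\<Union>k. C k) = U"
    by blast
  have l2: "2 < l" using Lstruct_D[OF Ls Ra] by simp
  have lenb: "length b = length a" using assms(8) unfolding same_type_def by simp
  have da': "distinct a'" using assms(2,11,13)
    by (auto simp: a'_def distinct_map inj_on_def nth_eq_iff_index_eq)
  have db': "distinct b'" using assms(5,11,13) lenb
    by (auto simp: b'_def distinct_map inj_on_def nth_eq_iff_index_eq)
  have la': "length a' = l" and lb': "length b' = l" using assms(12) by (simp_all add: a'_def b'_def)
  have fa: "length fa = l \<and> distinct fa" using block_ok2_D[of "Rsym l" a' fa] Lstruct_D[OF Ls Ra] la' by simp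
  have fb: "length fb = l \<and> distinct fb" using block_ok2_D[of "Rsym l" b' fb] Lstruct_D[OF Ls Rb] lb' by simp
  have sa'U: "set a' \<subseteq> U" "set fa \<subseteq> U" using Lstruct_D[OF Ls Ra] by auto
  have sb'U: "set b' \<subseteq> U" "set fb \<subseteq> U" using Lstruct_D[OF Ls Rb] by auto
  have NU: "N \<subseteq> U" and Nne: "N \<noteq> {}" and el: "\<And>\<phi> v. range v \<subseteq> N \<Longrightarrow> sat N I v \<phi> = sat U I v \<phi>"
    using assms(9) unfolding elem_sub_def by blast+
  obtain n0 where n0: "n0 \<in> N" using Nne by blast
  have RXFX: "rel2 I (Rsym l) (set a') (set fa)" using inv2[OF Ls, of "Rsym l" a' fa] Ra da' fa la' by simp

  have Usucc: "\<exists>W. distinct W \<and> length W = l \<and> set W \<subseteq> U \<and> I (Rsym l) (Z @ W)"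
    if Z: "distinct Z" "length Z = l" "set Z \<subseteq> U" for Z
  proof -
    obtain k where k: "set Z \<union> set a' \<union> set fa \<subseteq> C k"
      using chain_fin[of C "set Z \<union> set a' \<union> set fa"] C(1,4) Z sa'U by auto
    have "co (nsets (C k) l) (rel2 I (Esym l)) (rel2 I (Rsym l)) (rel3 I (Ksym l))"
      using co_inst[OF Ls C(3) l2 in_nsets[OF da' la'] in_nsets[of fa l] RXFX] k fa by auto
    then obtain Y where Y: "Y \<in> nsets (C k) l" "rel2 I (Rsym l) (set Z) Y"
      using co.succ[of "nsets (C k) l" _ _ _ "set Z"] in_nsets[OF Z(1,2)] k by blast
    obtain y where y: "distinct y" "set y = Y" "length y = l" "I (Rsym l) (Z @ y)"
      using rel2_list[OF Ls _ Y(2) Z(1)] Z(2) by auto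
    have "set y \<subseteq> U" using y(2) Y(1) C(2)[of k] unfolding nsets_def by auto
    then show ?thesis using y by blast
  qed

  have Nsucc: "\<exists>W. distinct W \<and> length W = l \<and> set W \<subseteq> N \<and> I (Rsym l) (Z @ W)"
    if Z: "distinct Z" "length Z = l" "set Z \<subseteq> N" for Z
  proof -
    define v where "v = (\<lambda>i. if i < l then Z ! i else n0)"
    have rv: "range v \<subseteq> N" using Z n0 unfolding v_def by auto
    define \<phi> where "\<phi> = Exs l l (Atom (Rsym l) [0..<2*l])"
    obtain W where W: "distinct W" "length W = l" "set W \<subseteq> U" "I (Rsym l) (Z @ W)"
      using Usucc Z NU by blast
    have "sat U I v \<phi>" unfolding \<phi>_def sat_Exs
      using W map_ovr[of Z l W v] Z by (auto simp: v_def)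
    then have "sat N I v \<phi>" using el[OF rv] by blast
    then obtain ws where ws: "length ws = l" "set ws \<subseteq> N" "I (Rsym l) (map (ovr l ws v) [0..<2*l])"
      unfolding \<phi>_def sat_Exs by auto
    then have IZ: "I (Rsym l) (Z @ ws)" using map_ovr[of Z l ws v] Z by (auto simp: v_def)
    have "distinct ws" using block_ok2_D[of "Rsym l" Z ws] Lstruct_D[OF Ls IZ] Z by simp
    then show ?thesis using ws IZ by blast
  qed

  obtain Z0 where Z0: "distinct Z0" "length Z0 = l" "set Z0 \<subseteq> N"
  proof -
    define v :: "nat \<Rightarrow> 'a" where "v = (\<lambda>i. n0)"
    have rv: "range v \<subseteq> N" using n0 unfolding v_def by auto
    define \<phi> where "\<phi> = Exs 0 (2*l) (Atom (Rsym l) [0..<2*l])"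
    have "sat U I v \<phi>" unfolding \<phi>_def sat_Exs
      using Ra sa'U la' fa map_ovr0[of "a' @ fa" "2*l" v] by (intro exI[of _ "a' @ fa"]) auto
    then have "sat N I v \<phi>" using el[OF rv] by blast
    then obtain ws where ws: "length ws = 2*l" "set ws \<subseteq> N" "I (Rsym l) (map (ovr 0 ws v) [0..<2*l])"
      unfolding \<phi>_def sat_Exs by auto
    then have "I (Rsym l) (take l ws @ drop l ws)" using map_ovr0[of ws "2*l" v] by simp
    then have "distinct (take l ws)" using block_ok2_D[of "Rsym l" "take l ws" "drop l ws"] Lstruct_D[OF Ls] ws(1)
      by simp
    moreover have "length (take l ws) = l" "set (take l ws) \<subseteq> N" using ws(1,2) set_take_subset[of l ws] by auto
    ultimately show ?thesis using that by blast
  qed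

  define P where "P = (\<lambda>Zk W. distinct W \<and> length W = l \<and> set W \<subseteq> N \<and> I (Rsym l) (Zk @ W))"
  define z where "z = rec_nat Z0 (\<lambda>_ Zk. SOME W. P Zk W)"
  have z0: "z 0 = Z0" and zS: "\<And>k. z (Suc k) = (SOME W. P (z k) W)" by (simp_all add: z_def)
  have zprop: "distinct (z k) \<and> length (z k) = l \<and> set (z k) \<subseteq> N" for k
  proof (induction k)
    case 0 then show ?case using Z0 z0 by simp
  next
    case (Suc k)
    then have "\<exists>W. P (z k) W" using Nsucc unfolding P_def by blast
    then have "P (z k) (z (Suc k))" unfolding zS by (rule someI_ex)
    then show ?case unfolding P_def by blast
  qed
  have zR: "I (Rsym l) (z k @ z (Suc k))" for k
  proof -
    have "\<exists>W. P (z k) W" using Nsucc zprop unfolding P_def by blast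
    then have "P (z k) (z (Suc k))" unfolding zS by (rule someI_ex)
    then show ?thesis unfolding P_def by blast
  qed

  define F where "F = set a' \<union> set fa \<union> set b' \<union> set fb \<union> (\<Union>i\<le>l. set (z i))"
  have "finite F" unfolding F_def by auto
  moreover have "F \<subseteq> U" unfolding F_def using sa'U sb'U zprop NU by blast
  ultimately obtain k0 where k0: "F \<subseteq> C k0" using chain_fin[of C F] C(1,4) by auto
  define A where "A = C k0"
  have inA: "set x \<in> nsets A l" if "distinct x" "length x = l" "set x \<subseteq> F" for x
    using in_nsets[OF that(1,2)] that(3) k0 unfolding A_def by blast
  have XS: "set a' \<in> nsets A l" "set fa \<in> nsets A l" "set b' \<in> nsets A l" "set fb \<in> nsets A l"
    using inA da' la' fa db' lb' fb unfolding F_def by auto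
  have ZS: "set (z i) \<in> nsets A l" if "i \<le> l" for i
    using inA zprop that unfolding F_def by blast
  have stA: "strong I A" unfolding A_def by (rule C(3))
  have coA: "co (nsets A l) (rel2 I (Esym l)) (rel2 I (Rsym l)) (rel3 I (Ksym l))"
    and cycA: "\<forall>Z \<in> nsets A l. in_Rcycle I A l Z"
    using co_inst[OF Ls stA l2 XS(1,2) RXFX] by blast+
  interpret co "nsets A l" "rel2 I (Esym l)" "rel2 I (Rsym l)" "rel3 I (Ksym l)" by (rule coA)

  define Zs where "Zs = (\<lambda>i. set (z i))"
  have ZsS: "i \<le> l \<Longrightarrow> Zs i \<in> nsets A l" for i using ZS unfolding Zs_def .
  have ZsR: "rel2 I (Rsym l) (Zs i) (Zs (Suc i))" for i
    using inv2[OF Ls, of "Rsym l" "z i" "z (Suc i)"] zR zprop unfolding Zs_def by simp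
  obtain xs where xs: "length xs = l" "xs ! 0 = Zs 0" "set xs \<subseteq> nsets A l"
      "\<forall>i. i + 1 < l \<longrightarrow> rel2 I (Rsym l) (xs ! i) (xs ! (i + 1))"
      "rel2 I (Rsym l) (xs ! (l - 1)) (xs ! 0)"
    using cycA ZsS[of 0] unfolding in_Rcycle_def by blast
  have xsS: "i < l \<Longrightarrow> xs ! i \<in> nsets A l" for i using xs(1,3) by auto
  have Exs_i: "i < l \<longrightarrow> rel2 I (Esym l) (Zs i) (xs ! i)" for i
  proof (induction i)
    case 0 then show ?case using xs(2) ZsS[of 0] Erefl by simp
  next
    case (Suc i)
    show ?case
    proof
      assume si: "Suc i < l"
      then have e: "rel2 I (Esym l) (Zs i) (xs ! i)" using Suc by simp
      have "rel2 I (Rsym l) (xs ! i) (Zs (Suc i))"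
        using Rresp[of "Zs i" "xs ! i" "Zs (Suc i)" "Zs (Suc i)"] e ZsR ZsS xsS si Erefl by simp
      moreover have "rel2 I (Rsym l) (xs ! i) (xs ! Suc i)" using xs(4) si by simp
      ultimately have "rel2 I (Esym l) (xs ! Suc i) (Zs (Suc i))"
        using Rfun[of "xs ! i"] ZsS xsS si by simp
      then show "rel2 I (Esym l) (Zs (Suc i)) (xs ! Suc i)" using Esym ZsS xsS si by simp
    qed
  qed
  have close_cyc: "rel2 I (Esym l) (Zs l) (Zs 0)"
  proof -
    have il: "l - 1 < l" "Suc (l - 1) = l" using l2 by auto
    have e: "rel2 I (Esym l) (Zs (l - 1)) (xs ! (l - 1))" using Exs_i il by blast
    have "rel2 I (Rsym l) (xs ! (l - 1)) (Zs l)"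
      using Rresp[of "Zs (l-1)" "xs ! (l-1)" "Zs l" "Zs l"] e ZsR[of "l - 1"] ZsS xsS il Erefl by simp
    then have "rel2 I (Esym l) (xs ! 0) (Zs l)"
      using Rfun[of "xs ! (l - 1)" "xs ! 0" "Zs l"] xs(5) ZsS xsS il l2 by simp
    then show ?thesis using Esym xs(2) ZsS by simp
  qed
  have n01: "\<not> rel2 I (Esym l) (Zs 0) (Zs 1)"
  proof
    assume "rel2 I (Esym l) (Zs 0) (Zs 1)"
    then have "rel2 I (Rsym l) (Zs 0) (Zs 0)"
      using Rresp[of "Zs 0" "Zs 0" "Zs 1" "Zs 0"] ZsR[of 0] ZsS[of 0] ZsS[of 1] l2 Erefl Esym by simp
    then show False using Rirr ZsS[of 0] by simp
  qed
  obtain i where i: "i < l" "lelt (Zs i) (set a') (Zs (Suc i))"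
    using cover[of l Zs "set a'"] ZsS XS l2 close_cyc n01 by auto

  define L where "L = length a"
  define v where "v = (\<lambda>j. if L \<le> j \<and> j < L + l then z i ! (j - L)
      else if L + l \<le> j \<and> j < L + 2*l then z (Suc i) ! (j - L - l) else n0)"
  have zN: "z k ! m \<in> N" if "m < l" for k m
    using zprop[of k] that nth_mem[of m "z k"] by auto
  have rv: "range v \<subseteq> N" unfolding v_def using zN n0 by auto
  define Pv where "Pv = [L..<L+l]"
  define Qv where "Qv = [L+l..<L+2*l]"
  define \<psi> where "\<psi> = Neg (Conj (Neg (Atom (Ksym l) (Pv @ idx @ Qv)))
      (Neg (Conj (Atom (Esym l) (Pv @ idx)) (Neg (Atom (Esym l) (idx @ Qv))))))"
  have mapP: "map (asg c v) Pv = z i" if "length c = L" for c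
    using that zprop[of i] by (intro nth_equalityI) (auto simp: Pv_def asg_def v_def)
  have mapQ: "map (asg c v) Qv = z (Suc i)" if "length c = L" for c
    using that zprop[of "Suc i"] by (intro nth_equalityI) (auto simp: Qv_def asg_def v_def)
  have mapa: "map (asg a v) idx = a'" using assms(13) unfolding a'_def asg_def by auto
  have mapb: "map (asg b v) idx = b'" using assms(13) lenb unfolding b'_def asg_def by auto
  have satc: "sat U I (asg c v) \<psi> \<longleftrightarrow> le_lt I l (z i) c' (z (Suc i))"
    if "length c = L" "map (asg c v) idx = c'" for c c'
    unfolding \<psi>_def le_lt_def using mapP[OF that(1)] mapQ[OF that(1)] that(2) by auto
  have st: "\<And>\<phi> v. range v \<subseteq> U \<Longrightarrow> (\<forall>i\<in>fv \<phi>. length a \<le> i \<longrightarrow> v i \<in> N) \<Longrightarrow>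
        (sat U I (asg a v) \<phi> \<longleftrightarrow> sat U I (asg b v) \<phi>)"
    using assms(10) unfolding same_type_def by blast
  have tr: "sat U I (asg a v) \<psi> \<longleftrightarrow> sat U I (asg b v) \<psi>"
    by (rule st) (use rv NU in auto)
  have "le_lt I l (z i) a' (z (Suc i))"
    using lelt_list[OF Ls zprop[THEN conjunct1] da' zprop[THEN conjunct1]] zprop la' i(2)
    unfolding lelt_def Zs_def by blast
  then have "le_lt I l (z i) b' (z (Suc i))" using tr satc[of a a'] satc[of b b'] mapa mapb lenb L_def by simp
  then have lY: "lelt (Zs i) (set b') (Zs (Suc i))"
    using lelt_list[OF Ls zprop[THEN conjunct1] db' zprop[THEN conjunct1]] zprop lb'
    unfolding lelt_def Zs_def by blast
  have RYFY: "rel2 I (Rsym l) (set b') (set fb)" using inv2[OF Ls, of "Rsym l" b' fb] Rb db' fb lb' by simp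
  have "lelt (set a') (set b') (set fa) \<or> lelt (set b') (set a') (set fb)"
    using close[OF ZsS[of i] ZsS[of "Suc i"] XS(1,2) XS(3,4) ZsR[of i] RXFX RYFY i(2) lY] i(1) by simp
  then have "le_lt I l a' b' fa \<or> le_lt I l b' a' fb"
    using lelt_list[OF Ls da' db' fa[THEN conjunct2]] lelt_list[OF Ls db' da' fb[THEN conjunct2]] la' lb' fa fb
    unfolding lelt_def by blast
  then show "le_lt I l (map ((!) a) idx) (map ((!) b) idx) fa \<or> le_lt I l (map ((!) b) idx) (map ((!) a) idx) fb"
    by (simp add: a'_def b'_def)
qed

end
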